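(* Let $K$ be an algebraically closed field of characteristic $2$ and, for $c\in K$, let $X_c=\{c\,\sigma_1\sigma_3+\sigma_4=0\}\subset\mathbb{P}^3_K$. For every $c\neq0$, $X_c$ has exactly $10$ singular points, namely the $\mathfrak{S}_4$-orbits of $(0,0,1,1)$ and $(0,0,0,1)$, and all of them are nodes ($A_1$-singularities).
   Context: $\sigma_i$ is the $i$-th elementary symmetric polynomial in $x_1,\dots,x_4$; $\mathfrak{S}_4$ permutes coordinates. A node is a double point whose projectivized tangent cone is a smooth conic. *)

theory Defs
  imports "HOL-Analysis.Analysis" "HOL-Computational_Algebra.Polynomial"
begin

text \<open>Elementary symmetric polynomial sigma_k in the four coordinates x1..x4,
  evaluated over an arbitrary commutative ring (so that it can also be evaluated
  at polynomial arguments, for Taylor expansions).\<close>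
definition esym :: "nat \<Rightarrow> 'b::comm_ring_1 ^ 4 \<Rightarrow> 'b" where
  "esym k x = (\<Sum>S\<in>{S::4 set. card S = k}. \<Prod>i\<in>S. x $ i)"

definition quartic :: "'b::comm_ring_1 \<Rightarrow> 'b ^ 4 \<Rightarrow> 'b" where
  "quartic c x = c * esym 1 x * esym 3 x + esym 4 x"

text \<open>Taylor (Hasse) coefficient: the coefficient of t^k in F(p + t v).\<close>
definition taylor_coeff :: "'a::field \<Rightarrow> 'a ^ 4 \<Rightarrow> 'a ^ 4 \<Rightarrow> nat \<Rightarrow> 'a" where
  "taylor_coeff c p v k = coeff (quartic [:c:] (\<chi> i. [:p $ i, v $ i:])) k"

text \<open>p (nonzero, representing a point of P^3) is a singular point of X_c:
  it lies on X_c and all partial derivatives vanish (the linear term of the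
  expansion vanishes identically).\<close>
definition singular_point :: "'a::field \<Rightarrow> 'a ^ 4 \<Rightarrow> bool" where
  "singular_point c p \<longleftrightarrow> p \<noteq> 0 \<and> quartic c p = 0 \<and> (\<forall>v. taylor_coeff c p v 1 = 0)"

text \<open>Quadratic part of the expansion at p; at a singular point it is a quadratic
  form on K^4 / K p, whose zero locus in P(K^4/Kp) is the projectivized tangent cone.\<close>
definition tcone_form :: "'a::field \<Rightarrow> 'a ^ 4 \<Rightarrow> 'a ^ 4 \<Rightarrow> 'a" where
  "tcone_form c p v = taylor_coeff c p v 2"

text \<open>Node: a singular point whose projectivized tangent cone is a smooth conic,
  i.e. there is no point w of P(K^4/Kp) with Q(w) = 0 and all partial derivatives of Q
  at w zero (the partials of Q at w are the values of the polar form B(w,-)).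
  This also forces Q \<noteq> 0, i.e. the point is exactly a double point.\<close>
definition is_node :: "'a::field \<Rightarrow> 'a ^ 4 \<Rightarrow> bool" where
  "is_node c p \<longleftrightarrow> singular_point c p \<and>
     (\<forall>w. w \<notin> range (\<lambda>s. s *s p) \<longrightarrow>
        \<not> (tcone_form c p w = 0 \<and>
            (\<forall>u. tcone_form c p (w + u) - tcone_form c p w - tcone_form c p u = 0)))"

definition proj_pt :: "'a::field ^ 4 \<Rightarrow> ('a ^ 4) set" where
  "proj_pt p = {s *s p | s. s \<noteq> 0}"

definition perm_coords :: "(4 \<Rightarrow> 4) \<Rightarrow> 'a ^ 4 \<Rightarrow> 'a ^ 4" where
  "perm_coords \<sigma> x = (\<chi> i. x $ \<sigma> i)"

end

theory Submission
  imports Defs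
begin


lemma vector_4 [simp]:
 "(vector [x,y,z,w] ::('a::zero)^4)$1 = x"
 "(vector [x,y,z,w] ::('a::zero)^4)$2 = y"
 "(vector [x,y,z,w] ::('a::zero)^4)$3 = z"
 "(vector [x,y,z,w] ::('a::zero)^4)$4 = w"
  unfolding vector_def by simp_all

lemma distinct4: "(1::4) \<noteq> 2" "(1::4) \<noteq> 3" "(1::4) \<noteq> 4" "(2::4) \<noteq> 3" "(2::4) \<noteq> 4" "(3::4) \<noteq> 4"
  by simp_all

lemma cardsets: "{S::4 set. card S = k} = {S \<in> Pow {1,2,3,4}. card S = k}"
  using UNIV_4 by auto

lemma coll1: "{S. (S = a \<or> R S) \<and> Q S} = (if Q a then insert a else id) {S. R S \<and> Q S}"
  by auto
lemma coll2: "{S. (S = a) \<and> Q S} = (if Q a then {a} else {})"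
  by auto

lemma esym1: "esym 1 x = x$1 + x$2 + x$3 + x$4"
  unfolding esym_def cardsets
  by (simp add: Pow_insert coll1 coll2 algebra_simps)
lemma sets3: "{1,2,3::4} \<noteq> {1,2,4}" "{1,2,3::4} \<noteq> {1,3,4}" "{1,2,3::4} \<noteq> {2,3,4}"
  "{1,2,4::4} \<noteq> {1,3,4}" "{1,2,4::4} \<noteq> {2,3,4}" "{1,3,4::4} \<noteq> {2,3,4}"
  by (simp_all add: set_eq_iff, (rule exI[of _ 3] exI[of _ 4] exI[of _ 1] exI[of _ 2]; simp)+)
lemma esym3: "esym 3 x = x$1*x$2*x$3 + x$1*x$2*x$4 + x$1*x$3*x$4 + x$2*x$3*x$4"
  unfolding esym_def cardsets
  by (simp add: Pow_insert coll1 coll2 algebra_simps sets3)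
lemma esym4: "esym 4 x = x$1*x$2*x$3*x$4"
  unfolding esym_def cardsets
  by (simp add: Pow_insert coll1 coll2 algebra_simps)


lemma quartic_expl: "quartic c x = c * (x$1 + x$2 + x$3 + x$4) *
   (x$1*x$2*x$3 + x$1*x$2*x$4 + x$1*x$3*x$4 + x$2*x$3*x$4) + x$1*x$2*x$3*x$4"
  using esym1[of x] by (simp add: quartic_def esym3 esym4)

definition D1 :: "'a::comm_ring_1 \<Rightarrow> 'a \<Rightarrow> 'a \<Rightarrow> 'a \<Rightarrow> 'a \<Rightarrow> 'a" where
 "D1 k a b c d = k*(a*b*c + a*b*d + a*c*d + b*c*d) + k*(a+b+c+d)*(b*c+b*d+c*d) + b*c*d"

lemma taylor0: "taylor_coeff k p v 0 = quartic k p"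
  by (simp add: taylor_coeff_def quartic_expl coeff_mult)

lemma taylor1: "taylor_coeff k p v 1 = v$1 * D1 k (p$1) (p$2) (p$3) (p$4) + v$2 * D1 k (p$2) (p$1) (p$3) (p$4)
  + v$3 * D1 k (p$3) (p$1) (p$2) (p$4) + v$4 * D1 k (p$4) (p$1) (p$2) (p$3)"
  by (simp add: taylor_coeff_def quartic_expl coeff_mult D1_def algebra_simps)

definition Q2 :: "'a::comm_ring_1 \<Rightarrow> 'a^4 \<Rightarrow> 'a^4 \<Rightarrow> 'a" where
 "Q2 k p v = (let a = p$1; b = p$2; c = p$3; d = p$4; x = v$1; y = v$2; z = v$3; w = v$4 in
   k * ((a+b+c+d) * (x*y*c + x*b*z + a*y*z + x*y*d + x*b*w + a*y*w + x*z*d + x*c*w + a*z*w + y*z*d + y*c*w + b*z*w)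
      + (x+y+z+w) * (x*b*c + a*y*c + a*b*z + x*b*d + a*y*d + a*b*w + x*c*d + a*z*d + a*c*w + y*c*d + b*z*d + b*c*w))
   + x*y*c*d + x*b*z*d + x*b*c*w + a*y*z*d + a*y*c*w + a*b*z*w)"

lemma taylor2: "taylor_coeff k p v 2 = Q2 k p v"
  by (simp add: taylor_coeff_def quartic_expl coeff_mult Q2_def Let_def algebra_simps numeral_2_eq_2)




definition PF :: "'a::comm_ring_1 \<Rightarrow> 'a \<Rightarrow> 'a \<Rightarrow> 'a \<Rightarrow> 'a \<Rightarrow> 'a \<Rightarrow> bool" where
  "PF k s x y z w \<longleftrightarrow> (x - y) * (k * s * (z+w) + z*w) = 0"

lemma PF_sym: "PF k s x y z w \<longleftrightarrow> PF k s x y w z"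
  by (simp add: PF_def ac_simps)

lemma neg_char2: "(2::'a::comm_ring_1) = 0 \<Longrightarrow> - x = (x::'a)"
proof -
  assume "(2::'a) = 0"
  then have "x + x = 0" by (metis mult_2 mult_zero_left)
  then show ?thesis by (metis add_eq_0_iff2)
qed

lemma eqcase:
  fixes a b c d k :: "'a::field"
  assumes two: "(2::'a) = 0" and k: "k \<noteq> 0" and s: "a+b+c+d \<noteq> 0" and ab: "a = b"
    and p1: "PF k (a+b+c+d) c d a b" and p2: "PF k (a+b+c+d) a c b d"
  shows "a = 0 \<and> b = 0 \<and> (c = 0 \<and> d \<noteq> 0 \<or> d = 0 \<and> c \<noteq> 0)"
proof -
  have n: "\<And>x::'a. - x = x" using neg_char2[OF two] .
  have "(c - d) * (2*k*(a+b+c+d)*a + a*a) = 0" using p1 ab unfolding PF_def by algebra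
  then have e1: "(c - d) * (a*a) = 0" using two by simp
  have "a+b+c+d = c + d + 2*a" using ab by (simp add: mult_2 algebra_simps)
  then have "a+b+c+d = c + d" using two by simp
  also have "c + d = c - d" using n[of d] by (simp only: diff_conv_add_uminus)
  finally have "a+b+c+d = c - d" .
  then have "c - d \<noteq> 0" using s by metis
  with e1 have a0: "a = 0" by simp
  then have b0: "b = 0" using ab by simp
  have "c * (k*(a+b+c+d)*d) = 0" using p2 a0 b0 unfolding PF_def by algebra
  then have "c = 0 \<or> d = 0" using k s by simp
  moreover have "c + d \<noteq> 0" using s a0 b0 by simp
  ultimately show ?thesis using a0 b0 by auto
qed

lemma distcase:
  fixes a b c d k :: "'a::field"
  assumes p1: "PF k s a b c d" and p2: "PF k s a c b d" and p3: "PF k s a d b c"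
   and d: "a \<noteq> b" "a \<noteq> c" "a \<noteq> d" "b \<noteq> c" "b \<noteq> d" "c \<noteq> d"
  shows False
proof -
  have q1: "k * s * (c+d) + c*d = 0" using p1 d unfolding PF_def by simp
  have q2: "k * s * (b+d) + b*d = 0" using p2 d unfolding PF_def by simp
  have q3: "k * s * (b+c) + b*c = 0" using p3 d unfolding PF_def by simp
  have "(c - b) * (k * s + d) = 0" using q1 q2 by algebra
  then have "d = - (k * s)" using d by (simp add: eq_neg_iff_add_eq_0 add.commute)
  moreover have "(d - b) * (k * s + c) = 0" using q1 q3 by algebra
  then have "c = - (k * s)" using d by (simp add: eq_neg_iff_add_eq_0 add.commute)
  ultimately show False using d by simp
qed

lemma zerocase:
  fixes a b c d k :: "'a::field"
  assumes two: "(2::'a) = 0" and k: "k \<noteq> 0" and s: "a+b+c+d = 0" and a0: "a = 0"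
    and Db: "D1 k b a c d = 0" and nz: "\<not> (a = 0 \<and> b = 0 \<and> c = 0 \<and> d = 0)"
  shows "(b = 0 \<and> c = d \<and> c \<noteq> 0) \<or> (c = 0 \<and> b = d \<and> b \<noteq> 0) \<or> (d = 0 \<and> b = c \<and> b \<noteq> 0)"
proof -
  have n: "\<And>x::'a. - x = x" using neg_char2[OF two] .
  have s': "b+a+c+d = 0" using s by (simp add: ac_simps)
  have "k*(b*a*c+b*a*d+b*c*d+a*c*d) + k*(b+a+c+d)*(a*c+a*d+c*d) + a*c*d = 0" using Db unfolding D1_def .
  then have "k * (b*c*d) = 0" using s' a0 by (simp only: mult_zero_left mult_zero_right add_0_left add_0_right)
  then have "b = 0 \<or> c = 0 \<or> d = 0" using k by simp
  moreover have "c = d" if "b = 0"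
  proof -
    have "c + d = 0" using s a0 that by simp
    then have "c = - d" by (simp add: eq_neg_iff_add_eq_0)
    then show ?thesis using n[of d] by simp
  qed
  moreover have "b = d" if "c = 0"
  proof -
    have "b + d = 0" using s a0 that by simp
    then have "b = - d" by (simp add: eq_neg_iff_add_eq_0)
    then show ?thesis using n[of d] by simp
  qed
  moreover have "b = c" if "d = 0"
  proof -
    have "b + c = 0" using s a0 that by simp
    then have "b = - c" by (simp add: eq_neg_iff_add_eq_0)
    then show ?thesis using n[of c] by simp
  qed
  ultimately show ?thesis using nz a0 by metis
qed

lemma D1_23: "D1 k x y z w = D1 k x z y w" unfolding D1_def by (simp add: algebra_simps)
lemma D1_34: "D1 k x y z w = D1 k x y w z" unfolding D1_def by (simp add: algebra_simps)
lemma pfid: "(x - y)*(k*(x+y+z+w)*(z+w) + z*w) = D1 k y x z w - D1 k x y z w"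
  unfolding D1_def by (simp add: algebra_simps)
lemma pfD: "D1 k x y z w = 0 \<Longrightarrow> D1 k y x z w = 0 \<Longrightarrow> s = x+y+z+w \<Longrightarrow> PF k s x y z w"
  unfolding PF_def using pfid[of x y k z w] by simp

lemma classify:
  fixes a b c d k :: "'a::field"
  assumes two: "(2::'a) = 0" and k: "k \<noteq> 0" and nz: "\<not> (a = 0 \<and> b = 0 \<and> c = 0 \<and> d = 0)"
    and F: "k * (a+b+c+d) * (a*b*c + a*b*d + a*c*d + b*c*d) + a*b*c*d = 0"
    and Da: "D1 k a b c d = 0" and Db: "D1 k b a c d = 0" and Dc: "D1 k c a b d = 0" and Dd: "D1 k d a b c = 0"
  shows "(a=0 \<and> b=0 \<and> c=0 \<and> d\<noteq>0) \<or> (a=0 \<and> b=0 \<and> d=0 \<and> c\<noteq>0) \<or> (a=0 \<and> c=0 \<and> d=0 \<and> b\<noteq>0) \<or> (b=0 \<and> c=0 \<and> d=0 \<and> a\<noteq>0) \<or>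
    (a=0 \<and> b=0 \<and> c=d \<and> c\<noteq>0) \<or> (a=0 \<and> c=0 \<and> b=d \<and> b\<noteq>0) \<or> (a=0 \<and> d=0 \<and> b=c \<and> b\<noteq>0) \<or>
    (b=0 \<and> c=0 \<and> a=d \<and> a\<noteq>0) \<or> (b=0 \<and> d=0 \<and> a=c \<and> a\<noteq>0) \<or> (c=0 \<and> d=0 \<and> a=b \<and> a\<noteq>0)"
proof (cases "a+b+c+d = 0")
  case True
  have "a*b*c*d = 0" using F True by simp
  then consider "a = 0" | "b = 0" | "c = 0" | "d = 0" by (simp, blast)
  then show ?thesis
  proof cases
    case 1
    from zerocase[OF two k True 1 Db nz] show ?thesis using 1 by argo
    next case 2
    have s': "b+a+c+d = 0" using True by (simp add: ac_simps)
    have nz': "\<not> (b = 0 \<and> a = 0 \<and> c = 0 \<and> d = 0)" using nz by blast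
    from zerocase[OF two k s' 2 Da nz'] show ?thesis using 2 by argo
    next case 3
    have s': "c+a+b+d = 0" using True by (simp add: ac_simps)
    have nz': "\<not> (c = 0 \<and> a = 0 \<and> b = 0 \<and> d = 0)" using nz by blast
    have D': "D1 k a c b d = 0" using Da by (metis D1_23)
    from zerocase[OF two k s' 3 D' nz'] show ?thesis using 3 by argo
    next case 4
    have s': "d+a+b+c = 0" using True by (simp add: ac_simps)
    have nz': "\<not> (d = 0 \<and> a = 0 \<and> b = 0 \<and> c = 0)" using nz by blast
    have D': "D1 k a d b c = 0" using Da by (metis D1_23 D1_34)
    from zerocase[OF two k s' 4 D' nz'] show ?thesis using 4 by argo
  qed
next
  case False
  define s where "s = a+b+c+d"
  have sn: "s \<noteq> 0" using False s_def by simp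
  have pab: "PF k s a b c d"
  proof (rule pfD)
    show "D1 k a b c d = 0" using Da by (metis D1_23 D1_34)
    show "D1 k b a c d = 0" using Db by (metis D1_23 D1_34)
    show "s = a+b+c+d" using s_def by (simp add: ac_simps)
  qed
  have pac: "PF k s a c b d"
  proof (rule pfD)
    show "D1 k a c b d = 0" using Da by (metis D1_23 D1_34)
    show "D1 k c a b d = 0" using Dc by (metis D1_23 D1_34)
    show "s = a+c+b+d" using s_def by (simp add: ac_simps)
  qed
  have pad: "PF k s a d b c"
  proof (rule pfD)
    show "D1 k a d b c = 0" using Da by (metis D1_23 D1_34)
    show "D1 k d a b c = 0" using Dd by (metis D1_23 D1_34)
    show "s = a+d+b+c" using s_def by (simp add: ac_simps)
  qed
  have pbc: "PF k s b c a d"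
  proof (rule pfD)
    show "D1 k b c a d = 0" using Db by (metis D1_23 D1_34)
    show "D1 k c b a d = 0" using Dc by (metis D1_23 D1_34)
    show "s = b+c+a+d" using s_def by (simp add: ac_simps)
  qed
  have pbd: "PF k s b d a c"
  proof (rule pfD)
    show "D1 k b d a c = 0" using Db by (metis D1_23 D1_34)
    show "D1 k d b a c = 0" using Dd by (metis D1_23 D1_34)
    show "s = b+d+a+c" using s_def by (simp add: ac_simps)
  qed
  have pcd: "PF k s c d a b"
  proof (rule pfD)
    show "D1 k c d a b = 0" using Dc by (metis D1_23 D1_34)
    show "D1 k d c a b = 0" using Dd by (metis D1_23 D1_34)
    show "s = c+d+a+b" using s_def by (simp add: ac_simps)
  qed
  have pca: "PF k s c a b d"
  proof (rule pfD)
    show "D1 k c a b d = 0" using Dc by (metis D1_23 D1_34)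
    show "D1 k a c b d = 0" using Da by (metis D1_23 D1_34)
    show "s = c+a+b+d" using s_def by (simp add: ac_simps)
  qed
  have pba: "PF k s b a c d"
  proof (rule pfD)
    show "D1 k b a c d = 0" using Db by (metis D1_23 D1_34)
    show "D1 k a b c d = 0" using Da by (metis D1_23 D1_34)
    show "s = b+a+c+d" using s_def by (simp add: ac_simps)
  qed
  show ?thesis
  proof (cases "a = b \<or> a = c \<or> a = d \<or> b = c \<or> b = d \<or> c = d")
    case False
    have False by (rule distcase[OF pab pac pad]) (use False in simp_all)
    then show ?thesis ..
  next
    case True
    then consider "a = b" | "a = c" | "a = d" | "b = c" | "b = d" | "c = d" by blast
    then show ?thesis
    proof cases
      case 1
      note e = this
      have "a+b+c+d \<noteq> 0" using sn s_def by simp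
      from eqcase[OF two k this e] pcd pac show ?thesis unfolding s_def using e by argo
      next case 2
      note e = this
      have s2: "a+c+b+d = s" using s_def by (simp add: ac_simps)
      have "a+c+b+d \<noteq> 0" using sn s2 by simp
      from eqcase[OF two k this e] pbd pab show ?thesis unfolding s2 using e by argo
      next case 3
      note e = this
      have s2: "a+d+b+c = s" using s_def by (simp add: ac_simps)
      have "a+d+b+c \<noteq> 0" using sn s2 by simp
      from eqcase[OF two k this e] pbc PF_sym[THEN iffD1, OF pab] show ?thesis unfolding s2 using e by argo
      next case 4
      note e = this
      have s2: "b+c+a+d = s" using s_def by (simp add: ac_simps)
      have "b+c+a+d \<noteq> 0" using sn s2 by simp
      from eqcase[OF two k this e] pad pba show ?thesis unfolding s2 using e by argo
      next case 5
      note e = this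
      have s2: "b+d+a+c = s" using s_def by (simp add: ac_simps)
      have "b+d+a+c \<noteq> 0" using sn s2 by simp
      from eqcase[OF two k this e] pac PF_sym[THEN iffD1, OF pba] show ?thesis unfolding s2 using e by argo
      next case 6
      note e = this
      have s2: "c+d+a+b = s" using s_def by (simp add: ac_simps)
      have "c+d+a+b \<noteq> 0" using sn s2 by simp
      from eqcase[OF two k this e] pab PF_sym[THEN iffD1, OF pca] show ?thesis unfolding s2 using e by argo
    qed
  qed
qed




lemma e_vecs: "(vector [1,0,0,0] :: 'a::field^4) $ 1 = 1" by simp

lemma singular_iff: "singular_point k p \<longleftrightarrow> p \<noteq> 0 \<and> quartic k p = 0 \<and>
   D1 k (p$1) (p$2) (p$3) (p$4) = 0 \<and> D1 k (p$2) (p$1) (p$3) (p$4) = 0 \<and>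
   D1 k (p$3) (p$1) (p$2) (p$4) = 0 \<and> D1 k (p$4) (p$1) (p$2) (p$3) = 0"
proof -
  have "(\<forall>v. taylor_coeff k p v 1 = 0) \<longleftrightarrow> D1 k (p$1) (p$2) (p$3) (p$4) = 0 \<and> D1 k (p$2) (p$1) (p$3) (p$4) = 0 \<and>
   D1 k (p$3) (p$1) (p$2) (p$4) = 0 \<and> D1 k (p$4) (p$1) (p$2) (p$3) = 0"
  proof
    assume h: "\<forall>v. taylor_coeff k p v 1 = 0"
    show "D1 k (p$1) (p$2) (p$3) (p$4) = 0 \<and> D1 k (p$2) (p$1) (p$3) (p$4) = 0 \<and>
      D1 k (p$3) (p$1) (p$2) (p$4) = 0 \<and> D1 k (p$4) (p$1) (p$2) (p$3) = 0"
      using h[rule_format, of "vector [1,0,0,0]"] h[rule_format, of "vector [0,1,0,0]"]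
        h[rule_format, of "vector [0,0,1,0]"] h[rule_format, of "vector [0,0,0,1]"]
      unfolding taylor1 by simp
  qed (unfold taylor1, simp)
  then show ?thesis unfolding singular_point_def by blast
qed

lemma perm_comp [simp]: "perm_coords \<sigma> x $ i = x $ \<sigma> i"
  by (simp add: perm_coords_def)

lemma perm_inv_perm: "\<sigma> permutes UNIV \<Longrightarrow> perm_coords \<sigma> (perm_coords (inv \<sigma>) v) = v"
  by (simp add: vec_eq_iff permutes_inverses)

lemma perm_add: "perm_coords \<sigma> (x + y) = perm_coords \<sigma> x + perm_coords \<sigma> y"
  by (simp add: vec_eq_iff)
lemma perm_scale: "perm_coords \<sigma> (s *s x) = s *s perm_coords \<sigma> x"
  by (simp add: vec_eq_iff)
lemma perm_zero: "perm_coords \<sigma> 0 = 0"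
  by (simp add: vec_eq_iff)

lemma esym_perm:
  assumes "\<sigma> permutes (UNIV :: 4 set)"
  shows "esym k (perm_coords \<sigma> x) = esym k x"
proof -
  have inj: "inj \<sigma>" using assms permutes_inj by blast
  have injI: "inj (inv \<sigma>)" using assms by (meson permutes_inj permutes_inv)
  let ?A = "{S::4 set. card S = k}"
  have "esym k (perm_coords \<sigma> x) = (\<Sum>S\<in>?A. \<Prod>j\<in>\<sigma> ` S. x $ j)"
    unfolding esym_def
    by (rule sum.cong[OF refl]) (simp add: prod.reindex inj_on_subset[OF inj])
  also have "\<dots> = (\<Sum>T\<in>image \<sigma> ` ?A. \<Prod>j\<in>T. x $ j)"
    by (rule sum.reindex[symmetric, unfolded o_def]) (simp add: inj_on_def inj_image_eq_iff[OF inj])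
  also have "image \<sigma> ` ?A = ?A"
  proof
    show "image \<sigma> ` ?A \<subseteq> ?A" using inj by (auto simp: card_image inj_on_subset)
    show "?A \<subseteq> image \<sigma> ` ?A"
    proof
      fix T assume T: "T \<in> ?A"
      have "T = \<sigma> ` (inv \<sigma> ` T)" using assms by (simp add: image_comp permutes_inverses(1) o_def)
      moreover have "card (inv \<sigma> ` T) = k" using T injI by (simp add: card_image inj_on_subset)
      ultimately show "T \<in> image \<sigma> ` ?A" by blast
    qed
  qed
  finally show ?thesis unfolding esym_def .
qed

lemma quartic_perm: "\<sigma> permutes UNIV \<Longrightarrow> quartic c (perm_coords \<sigma> x) = quartic c x"
  by (simp add: quartic_def esym_perm)

lemma taylor_perm: "\<sigma> permutes UNIV \<Longrightarrow>
   taylor_coeff c (perm_coords \<sigma> p) (perm_coords \<sigma> v) n = taylor_coeff c p v n"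
proof -
  assume s: "\<sigma> permutes UNIV"
  have "(\<chi> i. [:perm_coords \<sigma> p $ i, perm_coords \<sigma> v $ i:]) = perm_coords \<sigma> (\<chi> i. [:p$i, v$i:])"
    by (simp add: vec_eq_iff)
  moreover have "quartic [:c:] (perm_coords \<sigma> X) = quartic [:c:] X" for X :: "'a poly ^ 4"
    by (rule quartic_perm[OF s])
  ultimately show ?thesis unfolding taylor_coeff_def by simp
qed

lemma singular_perm:
  assumes s: "\<sigma> permutes UNIV" and h: "singular_point c p"
  shows "singular_point c (perm_coords \<sigma> p)"
  unfolding singular_point_def
proof (intro conjI allI)
  show "perm_coords \<sigma> p \<noteq> 0"
  proof
    assume "perm_coords \<sigma> p = 0"
    then have "perm_coords (inv \<sigma>) (perm_coords \<sigma> p) = 0" by (simp add: perm_zero)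
    moreover have "perm_coords (inv \<sigma>) (perm_coords \<sigma> p) = p"
      using perm_inv_perm[OF permutes_inv[OF s], of p] s by (simp add: inv_inv_eq permutes_bij)
    ultimately show False using h unfolding singular_point_def by simp
  qed
  show "quartic c (perm_coords \<sigma> p) = 0" using h s by (simp add: quartic_perm singular_point_def)
  fix v
  have "taylor_coeff c (perm_coords \<sigma> p) v 1 = taylor_coeff c (perm_coords \<sigma> p) (perm_coords \<sigma> (perm_coords (inv \<sigma>) v)) 1"
    by (simp only: perm_inv_perm[OF s])
  also have "\<dots> = taylor_coeff c p (perm_coords (inv \<sigma>) v) 1" by (rule taylor_perm[OF s])
  also have "\<dots> = 0" using h unfolding singular_point_def by blast
  finally show "taylor_coeff c (perm_coords \<sigma> p) v 1 = 0" .
qed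

lemma node_perm:
  assumes s: "\<sigma> permutes UNIV" and h: "is_node c p"
  shows "is_node c (perm_coords \<sigma> p)"
  unfolding is_node_def
proof (intro conjI allI impI notI)
  show "singular_point c (perm_coords \<sigma> p)" using singular_perm[OF s] h unfolding is_node_def by blast
  fix w assume nr: "w \<notin> range (\<lambda>s. s *s perm_coords \<sigma> p)"
    and hw: "tcone_form c (perm_coords \<sigma> p) w = 0 \<and>
       (\<forall>u. tcone_form c (perm_coords \<sigma> p) (w + u) - tcone_form c (perm_coords \<sigma> p) w - tcone_form c (perm_coords \<sigma> p) u = 0)"
  define w' where "w' = perm_coords (inv \<sigma>) w"
  have ww: "w = perm_coords \<sigma> w'" unfolding w'_def by (simp only: perm_inv_perm[OF s])
  have tc: "\<And>x. tcone_form c (perm_coords \<sigma> p) (perm_coords \<sigma> x) = tcone_form c p x"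
    unfolding tcone_form_def by (rule taylor_perm[OF s])
  have nr': "w' \<notin> range (\<lambda>s. s *s p)"
  proof
    assume "w' \<in> range (\<lambda>s. s *s p)"
    then obtain r where "w' = r *s p" by blast
    then have "w = r *s perm_coords \<sigma> p" using ww perm_scale by metis
    then show False using nr by blast
  qed
  have "tcone_form c p w' = 0" using hw tc ww by metis
  moreover have "\<forall>u. tcone_form c p (w' + u) - tcone_form c p w' - tcone_form c p u = 0"
  proof
    fix u
    have "tcone_form c (perm_coords \<sigma> p) (w + perm_coords \<sigma> u) - tcone_form c (perm_coords \<sigma> p) w
       - tcone_form c (perm_coords \<sigma> p) (perm_coords \<sigma> u) = 0" using hw by blast
    then show "tcone_form c p (w' + u) - tcone_form c p w' - tcone_form c p u = 0"
      unfolding ww perm_add[symmetric] tc .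
  qed
  ultimately show False using h nr' unfolding is_node_def by blast
qed



lemma n1Q: "Q2 k (t *s vector [0,0,1,1]) w = (t*t*(w$1)*(w$2) + k*t*t*(w$2)*(w$4) + k*t*t*(w$2)*(w$3) + k*t*t*(w$2)*(w$2) + k*t*t*(w$1)*(w$4) + k*t*t*(w$1)*(w$3) + k*t*t*(w$1)*(w$1)) + 2 * (k*t*t*(w$2)*(w$4) + k*t*t*(w$2)*(w$3) + k*t*t*(w$1)*(w$4) + k*t*t*(w$1)*(w$3) + 3*k*t*t*(w$1)*(w$2))"
  by (simp add: Q2_def Let_def algebra_simps)
lemma n1B1: "Q2 k (t *s vector [0,0,1,1]) (w + vector [1,0,0,0]) - Q2 k (t *s vector [0,0,1,1]) w - Q2 k (t *s vector [0,0,1,1]) (vector [1,0,0,0]) = (t*t*(w$2) + k*t*t*(w$4) + k*t*t*(w$3)) + 2 * (k*t*t*(w$4) + k*t*t*(w$3) + 3*k*t*t*(w$2) + k*t*t*(w$1))"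
  by (simp add: Q2_def Let_def algebra_simps)
lemma n1B2: "Q2 k (t *s vector [0,0,1,1]) (w + vector [0,1,0,0]) - Q2 k (t *s vector [0,0,1,1]) w - Q2 k (t *s vector [0,0,1,1]) (vector [0,1,0,0]) = (t*t*(w$1) + k*t*t*(w$4) + k*t*t*(w$3)) + 2 * (k*t*t*(w$4) + k*t*t*(w$3) + k*t*t*(w$2) + 3*k*t*t*(w$1))"
  by (simp add: Q2_def Let_def algebra_simps)
lemma n1B3: "Q2 k (t *s vector [0,0,1,1]) (w + vector [0,0,1,0]) - Q2 k (t *s vector [0,0,1,1]) w - Q2 k (t *s vector [0,0,1,1]) (vector [0,0,1,0]) = (k*t*t*(w$2) + k*t*t*(w$1)) + 2 * (k*t*t*(w$2) + k*t*t*(w$1))"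
  by (simp add: Q2_def Let_def algebra_simps)
lemma n1B4: "Q2 k (t *s vector [0,0,1,1]) (w + vector [0,0,0,1]) - Q2 k (t *s vector [0,0,1,1]) w - Q2 k (t *s vector [0,0,1,1]) (vector [0,0,0,1]) = (k*t*t*(w$2) + k*t*t*(w$1)) + 2 * (k*t*t*(w$2) + k*t*t*(w$1))"
  by (simp add: Q2_def Let_def algebra_simps)
lemma n2Q: "Q2 k (t *s vector [0,0,0,1]) w = (k*t*t*(w$2)*(w$3) + k*t*t*(w$1)*(w$3) + k*t*t*(w$1)*(w$2)) + 2 * 0"
  by (simp add: Q2_def Let_def algebra_simps)
lemma n2B1: "Q2 k (t *s vector [0,0,0,1]) (w + vector [1,0,0,0]) - Q2 k (t *s vector [0,0,0,1]) w - Q2 k (t *s vector [0,0,0,1]) (vector [1,0,0,0]) = (k*t*t*(w$3) + k*t*t*(w$2)) + 2 * 0"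
  by (simp add: Q2_def Let_def algebra_simps)
lemma n2B2: "Q2 k (t *s vector [0,0,0,1]) (w + vector [0,1,0,0]) - Q2 k (t *s vector [0,0,0,1]) w - Q2 k (t *s vector [0,0,0,1]) (vector [0,1,0,0]) = (k*t*t*(w$3) + k*t*t*(w$1)) + 2 * 0"
  by (simp add: Q2_def Let_def algebra_simps)
lemma n2B3: "Q2 k (t *s vector [0,0,0,1]) (w + vector [0,0,1,0]) - Q2 k (t *s vector [0,0,0,1]) w - Q2 k (t *s vector [0,0,0,1]) (vector [0,0,1,0]) = (k*t*t*(w$2) + k*t*t*(w$1)) + 2 * 0"
  by (simp add: Q2_def Let_def algebra_simps)
lemma n2B4: "Q2 k (t *s vector [0,0,0,1]) (w + vector [0,0,0,1]) - Q2 k (t *s vector [0,0,0,1]) w - Q2 k (t *s vector [0,0,0,1]) (vector [0,0,0,1]) = 0 + 2 * 0"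
  by (simp add: Q2_def Let_def algebra_simps)

lemma core1:
  fixes k t x y z w :: "'a::field"
  assumes two: "(2::'a) = 0" and k: "k \<noteq> 0" and t: "t \<noteq> 0"
   and Q: "t*t*x*y + k*t*t*y*w + k*t*t*y*z + k*t*t*y*y + k*t*t*x*w + k*t*t*x*z + k*t*t*x*x = 0"
   and B1: "t*t*y + k*t*t*w + k*t*t*z = 0"
   and B3: "k*t*t*y + k*t*t*x = 0"
  shows "x = 0 \<and> y = 0 \<and> z = w"
proof -
  have n: "\<And>x::'a. - x = x" using neg_char2[OF two] .
  have "(k*t*t) * (x+y) = 0" using B3 by (simp add: algebra_simps)
  then have xy: "x + y = 0" using k t by simp
  have "t*t*x*y + k*t*t*y*w + k*t*t*y*z + k*t*t*y*y + k*t*t*x*w + k*t*t*x*z + k*t*t*x*x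
     = t*t*x*y + k*t*t*((x+y)*(z+w) + (x+y)*(x+y)) - 2*k*t*t*x*y"
    by (simp add: algebra_simps)
  then have "t*t*x*y = 0" using Q xy two by simp
  then have "x = 0 \<or> y = 0" using t by simp
  then have x0: "x = 0" and y0: "y = 0" using xy by auto
  have "(k*t*t) * (z+w) = 0" using B1 y0 by (simp add: algebra_simps)
  then have "z + w = 0" using k t by simp
  then have "z = - w" by (simp add: eq_neg_iff_add_eq_0)
  then have "z = w" using n[of w] by simp
  then show ?thesis using x0 y0 by simp
qed

lemma core2:
  fixes k t x y z :: "'a::field"
  assumes two: "(2::'a) = 0" and k: "k \<noteq> 0" and t: "t \<noteq> 0"
   and Q: "k*t*t*y*z + k*t*t*x*z + k*t*t*x*y = 0"
   and B1: "k*t*t*z + k*t*t*y = 0"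
   and B2: "k*t*t*z + k*t*t*x = 0"
  shows "x = 0 \<and> y = 0 \<and> z = 0"
proof -
  have n: "\<And>x::'a. - x = x" using neg_char2[OF two] .
  have "(k*t*t) * (z+y) = 0" using B1 by (simp add: algebra_simps)
  then have "z + y = 0" using k t by simp
  then have "y = - z" by (simp add: eq_neg_iff_add_eq_0 add.commute)
  then have yz: "y = z" using n[of z] by simp
  have "(k*t*t) * (z+x) = 0" using B2 by (simp add: algebra_simps)
  then have "z + x = 0" using k t by simp
  then have "x = - z" by (simp add: eq_neg_iff_add_eq_0 add.commute)
  then have xz: "x = z" using n[of z] by simp
  have "k*t*t*y*z + k*t*t*x*z + k*t*t*x*y = (k*t*t)*(z*z) + 2*((k*t*t)*(z*z))"
    using xz yz by (simp add: algebra_simps)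
  then have "(k*t*t)*(z*z) = 0" using Q two by simp
  then have "z = 0" using k t by simp
  then show ?thesis using xz yz by simp
qed

lemma dbl: "(2::'a::comm_ring_1) = 0 \<Longrightarrow> x + x = (0::'a)"
  by (metis mult_2 mult_zero_left)

lemma sing1: assumes two: "(2::'a::field) = 0" and t: "t \<noteq> 0"
  shows "singular_point k (t *s vector [0,0,1,1] :: 'a^4)"
  unfolding singular_iff quartic_expl using t dbl[OF two, of t]
  by (simp add: D1_def vec_eq_iff forall_4 algebra_simps)

lemma sing2: assumes t: "t \<noteq> 0"
  shows "singular_point k (t *s vector [0,0,0,1] :: 'a::field^4)"
  unfolding singular_iff quartic_expl using t
  by (simp add: D1_def vec_eq_iff forall_4)

lemma node1: assumes two: "(2::'a::field) = 0" and k: "k \<noteq> 0" and t: "t \<noteq> 0"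
  shows "is_node k (t *s vector [0,0,1,1] :: 'a^4)"
  unfolding is_node_def
proof (intro conjI allI impI notI)
  show "singular_point k (t *s vector [0,0,1,1] :: 'a^4)" by (rule sing1[OF two t])
  fix w :: "'a^4"
  assume nr: "w \<notin> range (\<lambda>s. s *s (t *s vector [0,0,1,1]))"
    and hw: "tcone_form k (t *s vector [0,0,1,1]) w = 0 \<and>
      (\<forall>u. tcone_form k (t *s vector [0,0,1,1]) (w + u) - tcone_form k (t *s vector [0,0,1,1]) w - tcone_form k (t *s vector [0,0,1,1]) u = 0)"
  have Q: "Q2 k (t *s vector [0,0,1,1]) w = 0" using hw unfolding tcone_form_def taylor2 by blast
  have B: "Q2 k (t *s vector [0,0,1,1]) (w + u) - Q2 k (t *s vector [0,0,1,1]) w - Q2 k (t *s vector [0,0,1,1]) u = 0" for u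
    using hw unfolding tcone_form_def taylor2 by blast
  have c: "w$1 = 0 \<and> w$2 = 0 \<and> w$3 = w$4"
  proof (rule core1[OF two k t])
    show "t*t*(w$1)*(w$2) + k*t*t*(w$2)*(w$4) + k*t*t*(w$2)*(w$3) + k*t*t*(w$2)*(w$2) + k*t*t*(w$1)*(w$4) + k*t*t*(w$1)*(w$3) + k*t*t*(w$1)*(w$1) = 0"
      using Q unfolding n1Q using two by simp
    show "t*t*(w$2) + k*t*t*(w$4) + k*t*t*(w$3) = 0"
      using B[of "vector [1,0,0,0]"] unfolding n1B1 using two by simp
    show "k*t*t*(w$2) + k*t*t*(w$1) = 0"
      using B[of "vector [0,0,1,0]"] unfolding n1B3 using two by simp
  qed
  have "w = (w$4 / t) *s (t *s vector [0,0,1,1])"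
    using c t by (simp add: vec_eq_iff forall_4)
  then show False using nr by blast
qed

lemma node2: assumes two: "(2::'a::field) = 0" and k: "k \<noteq> 0" and t: "t \<noteq> 0"
  shows "is_node k (t *s vector [0,0,0,1] :: 'a^4)"
  unfolding is_node_def
proof (intro conjI allI impI notI)
  show "singular_point k (t *s vector [0,0,0,1] :: 'a^4)" by (rule sing2[OF t])
  fix w :: "'a^4"
  assume nr: "w \<notin> range (\<lambda>s. s *s (t *s vector [0,0,0,1]))"
    and hw: "tcone_form k (t *s vector [0,0,0,1]) w = 0 \<and>
      (\<forall>u. tcone_form k (t *s vector [0,0,0,1]) (w + u) - tcone_form k (t *s vector [0,0,0,1]) w - tcone_form k (t *s vector [0,0,0,1]) u = 0)"
  have Q: "Q2 k (t *s vector [0,0,0,1]) w = 0" using hw unfolding tcone_form_def taylor2 by blast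
  have B: "Q2 k (t *s vector [0,0,0,1]) (w + u) - Q2 k (t *s vector [0,0,0,1]) w - Q2 k (t *s vector [0,0,0,1]) u = 0" for u
    using hw unfolding tcone_form_def taylor2 by blast
  have c: "w$1 = 0 \<and> w$2 = 0 \<and> w$3 = 0"
  proof (rule core2[OF two k t])
    show "k*t*t*(w$2)*(w$3) + k*t*t*(w$1)*(w$3) + k*t*t*(w$1)*(w$2) = 0"
      using Q unfolding n2Q using two by simp
    show "k*t*t*(w$3) + k*t*t*(w$2) = 0"
      using B[of "vector [1,0,0,0]"] unfolding n2B1 by simp
    show "k*t*t*(w$3) + k*t*t*(w$1) = 0"
      using B[of "vector [0,1,0,0]"] unfolding n2B2 by simp
  qed
  have "w = (w$4 / t) *s (t *s vector [0,0,0,1])"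
    using c t by (simp add: vec_eq_iff forall_4)
  then show False using nr by blast
qed




definition Reps :: "('a::field ^ 4) set" where
  "Reps = {vector [0,0,1,1], vector [0,1,0,1], vector [1,0,0,1], vector [0,1,1,0], vector [1,0,1,0],
           vector [1,1,0,0], vector [0,0,0,1], vector [0,0,1,0], vector [0,1,0,0], vector [1,0,0,0]}"

lemma vector4_eq: "(vector [a,b,c,d] :: 'a::zero ^4) = vector [e,f,g,h] \<longleftrightarrow> a = e \<and> b = f \<and> c = g \<and> d = h"
  by (simp add: vec_eq_iff forall_4)

lemma card_Reps: "card (Reps :: ('a::field ^ 4) set) = 10"
  unfolding Reps_def by (simp add: vector4_eq)

lemma Reps_01: "r \<in> Reps \<Longrightarrow> (\<forall>i. r $ i = 0 \<or> r $ i = 1) \<and> r \<noteq> 0"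
  unfolding Reps_def by (auto simp: forall_4 vec_eq_iff)

lemma Reps_perm: "r \<in> Reps \<Longrightarrow> \<exists>\<sigma> a. \<sigma> permutes (UNIV :: 4 set) \<and> a \<in> {vector [0, 0, 1, 1], vector [0, 0, 0, 1]} \<and>
   r = perm_coords \<sigma> a"
  unfolding Reps_def
proof (elim insertE emptyE)
  have P: "Transposition.transpose a b permutes (UNIV :: 4 set)" for a b by (simp add: permutes_swap_id)
  have tr: "(1::4) \<noteq> 2" "(1::4) \<noteq> 3" "(1::4) \<noteq> 4" "(2::4) \<noteq> 3" "(2::4) \<noteq> 4" "(3::4) \<noteq> 4"
     "(2::4) \<noteq> 1" "(3::4) \<noteq> 1" "(4::4) \<noteq> 1" "(3::4) \<noteq> 2" "(4::4) \<noteq> 2" "(4::4) \<noteq> 3" by simp_all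
  show "r = vector [0,0,1,1] \<Longrightarrow> ?thesis"
    by (intro exI[of _ "id"] exI[of _ "vector [0,0,1,1] :: 'a^4"] conjI) (simp_all add: vec_eq_iff forall_4 tr P permutes_compose)
  show "r = vector [0,1,0,1] \<Longrightarrow> ?thesis"
    by (intro exI[of _ "Transposition.transpose 2 3"] exI[of _ "vector [0,0,1,1] :: 'a^4"] conjI) (simp_all add: vec_eq_iff forall_4 tr P permutes_compose)
  show "r = vector [1,0,0,1] \<Longrightarrow> ?thesis"
    by (intro exI[of _ "Transposition.transpose 1 3"] exI[of _ "vector [0,0,1,1] :: 'a^4"] conjI) (simp_all add: vec_eq_iff forall_4 tr P permutes_compose)
  show "r = vector [0,1,1,0] \<Longrightarrow> ?thesis"
    by (intro exI[of _ "Transposition.transpose 2 4"] exI[of _ "vector [0,0,1,1] :: 'a^4"] conjI) (simp_all add: vec_eq_iff forall_4 tr P permutes_compose)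
  show "r = vector [1,0,1,0] \<Longrightarrow> ?thesis"
    by (intro exI[of _ "Transposition.transpose 1 4"] exI[of _ "vector [0,0,1,1] :: 'a^4"] conjI) (simp_all add: vec_eq_iff forall_4 tr P permutes_compose)
  show "r = vector [1,1,0,0] \<Longrightarrow> ?thesis"
    by (intro exI[of _ "Transposition.transpose 1 3 \<circ> Transposition.transpose 2 4"] exI[of _ "vector [0,0,1,1] :: 'a^4"] conjI) (simp_all add: vec_eq_iff forall_4 tr P permutes_compose)
  show "r = vector [0,0,0,1] \<Longrightarrow> ?thesis"
    by (intro exI[of _ "id"] exI[of _ "vector [0,0,0,1] :: 'a^4"] conjI) (simp_all add: vec_eq_iff forall_4 tr P permutes_compose)
  show "r = vector [0,0,1,0] \<Longrightarrow> ?thesis"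
    by (intro exI[of _ "Transposition.transpose 3 4"] exI[of _ "vector [0,0,0,1] :: 'a^4"] conjI) (simp_all add: vec_eq_iff forall_4 tr P permutes_compose)
  show "r = vector [0,1,0,0] \<Longrightarrow> ?thesis"
    by (intro exI[of _ "Transposition.transpose 2 4"] exI[of _ "vector [0,0,0,1] :: 'a^4"] conjI) (simp_all add: vec_eq_iff forall_4 tr P permutes_compose)
  show "r = vector [1,0,0,0] \<Longrightarrow> ?thesis"
    by (intro exI[of _ "Transposition.transpose 1 4"] exI[of _ "vector [0,0,0,1] :: 'a^4"] conjI) (simp_all add: vec_eq_iff forall_4 tr P permutes_compose)
qed

lemma classify_vec:
  fixes c :: "'a::field"
  assumes two: "(2::'a) = 0" and k: "c \<noteq> 0" and sp: "singular_point c p"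
  shows "\<exists>r\<in>Reps. \<exists>t. t \<noteq> 0 \<and> p = t *s r"
proof -
  define a b cc d where "a = p$1" "b = p$2" "cc = p$3" "d = p$4"
  have nz: "\<not> (a = 0 \<and> b = 0 \<and> cc = 0 \<and> d = 0)"
    using sp unfolding singular_point_def a_b_cc_d_def by (auto simp: vec_eq_iff forall_4)
  have h: "quartic c p = 0 \<and> D1 c a b cc d = 0 \<and> D1 c b a cc d = 0 \<and> D1 c cc a b d = 0 \<and> D1 c d a b cc = 0"
    using sp unfolding singular_iff a_b_cc_d_def by blast
  have F: "c * (a+b+cc+d) * (a*b*cc + a*b*d + a*cc*d + b*cc*d) + a*b*cc*d = 0"
    using h unfolding quartic_expl a_b_cc_d_def by simp
  have pv: "p = vector [a,b,cc,d]" unfolding a_b_cc_d_def by (simp add: vec_eq_iff forall_4)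
  have E: "\<exists>r\<in>Reps. \<exists>t. t \<noteq> 0 \<and> p = t *s r" if "r \<in> Reps" "t \<noteq> 0" "p = t *s r" for r t
    using that by blast
  have D: "(a=0 \<and> b=0 \<and> cc=0 \<and> d\<noteq>0) \<or> (a=0 \<and> b=0 \<and> d=0 \<and> cc\<noteq>0) \<or> (a=0 \<and> cc=0 \<and> d=0 \<and> b\<noteq>0) \<or> (b=0 \<and> cc=0 \<and> d=0 \<and> a\<noteq>0) \<or> (a=0 \<and> b=0 \<and> cc=d \<and> cc\<noteq>0) \<or> (a=0 \<and> cc=0 \<and> b=d \<and> b\<noteq>0) \<or> (a=0 \<and> d=0 \<and> b=cc \<and> b\<noteq>0) \<or> (b=0 \<and> cc=0 \<and> a=d \<and> a\<noteq>0) \<or> (b=0 \<and> d=0 \<and> a=cc \<and> a\<noteq>0) \<or> (cc=0 \<and> d=0 \<and> a=b \<and> a\<noteq>0)"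
    using h by (intro classify[OF two k nz F]) simp_all
  then show ?thesis
  proof (elim disjE)
    assume "a=0 \<and> b=0 \<and> cc=0 \<and> d\<noteq>0"
    then show ?thesis by (intro E[of "vector [0,0,0,1]" d]) (auto simp: Reps_def pv vec_eq_iff forall_4)
  next
    assume "a=0 \<and> b=0 \<and> d=0 \<and> cc\<noteq>0"
    then show ?thesis by (intro E[of "vector [0,0,1,0]" cc]) (auto simp: Reps_def pv vec_eq_iff forall_4)
  next
    assume "a=0 \<and> cc=0 \<and> d=0 \<and> b\<noteq>0"
    then show ?thesis by (intro E[of "vector [0,1,0,0]" b]) (auto simp: Reps_def pv vec_eq_iff forall_4)
  next
    assume "b=0 \<and> cc=0 \<and> d=0 \<and> a\<noteq>0"
    then show ?thesis by (intro E[of "vector [1,0,0,0]" a]) (auto simp: Reps_def pv vec_eq_iff forall_4)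
  next
    assume "a=0 \<and> b=0 \<and> cc=d \<and> cc\<noteq>0"
    then show ?thesis by (intro E[of "vector [0,0,1,1]" cc]) (auto simp: Reps_def pv vec_eq_iff forall_4)
  next
    assume "a=0 \<and> cc=0 \<and> b=d \<and> b\<noteq>0"
    then show ?thesis by (intro E[of "vector [0,1,0,1]" b]) (auto simp: Reps_def pv vec_eq_iff forall_4)
  next
    assume "a=0 \<and> d=0 \<and> b=cc \<and> b\<noteq>0"
    then show ?thesis by (intro E[of "vector [0,1,1,0]" b]) (auto simp: Reps_def pv vec_eq_iff forall_4)
  next
    assume "b=0 \<and> cc=0 \<and> a=d \<and> a\<noteq>0"
    then show ?thesis by (intro E[of "vector [1,0,0,1]" a]) (auto simp: Reps_def pv vec_eq_iff forall_4)
  next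
    assume "b=0 \<and> d=0 \<and> a=cc \<and> a\<noteq>0"
    then show ?thesis by (intro E[of "vector [1,0,1,0]" a]) (auto simp: Reps_def pv vec_eq_iff forall_4)
  next
    assume "cc=0 \<and> d=0 \<and> a=b \<and> a\<noteq>0"
    then show ?thesis by (intro E[of "vector [1,1,0,0]" a]) (auto simp: Reps_def pv vec_eq_iff forall_4)
  qed
qed

lemma proj_scale: "t \<noteq> 0 \<Longrightarrow> proj_pt (t *s r) = proj_pt (r :: 'a::field^4)"
  unfolding proj_pt_def
proof (intro equalityI subsetI)
  fix x assume t: "t \<noteq> 0"
  { assume "x \<in> {s *s (t *s r) |s. s \<noteq> 0}"
    then obtain s where "s \<noteq> 0" "x = s *s (t *s r)" by blast
    then show "x \<in> {s *s r |s. s \<noteq> 0}" using t by (intro CollectI exI[of _ "s*t"]) (simp add: vector_smult_assoc) }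
  { assume "x \<in> {s *s r |s. s \<noteq> 0}"
    then obtain s where "s \<noteq> 0" "x = s *s r" by blast
    then show "x \<in> {s *s (t *s r) |s. s \<noteq> 0}" using t by (intro CollectI exI[of _ "s/t"]) (simp add: vector_smult_assoc) }
qed

lemma proj_inj: "inj_on proj_pt (Reps :: ('a::field^4) set)"
proof (rule inj_onI)
  fix r1 r2 :: "'a^4" assume r1: "r1 \<in> Reps" and r2: "r2 \<in> Reps" and e: "proj_pt r1 = proj_pt r2"
  have "r1 \<in> proj_pt r1" unfolding proj_pt_def by (intro CollectI exI[of _ 1]) simp
  then obtain s where s: "s \<noteq> 0" "r1 = s *s r2" using e unfolding proj_pt_def by blast
  have z1: "\<forall>i. r1 $ i = 0 \<or> r1 $ i = 1" "r1 \<noteq> 0" using Reps_01[OF r1] by auto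
  have z2: "\<forall>i. r2 $ i = 0 \<or> r2 $ i = 1" "r2 \<noteq> 0" using Reps_01[OF r2] by auto
  obtain i where "r2 $ i \<noteq> 0" using z2(2) by (auto simp: vec_eq_iff)
  then have "r2 $ i = 1" using z2(1) by blast
  then have "r1 $ i = s" using s by simp
  then have "s = 1" using z1(1) s(1) by metis
  then show "r1 = r2" using s by simp
qed

lemma rep_singular:
  assumes two: "(2::'a::field) = 0" and r: "(r::'a^4) \<in> Reps"
  shows "singular_point k r"
proof -
  obtain \<sigma> a where sa: "\<sigma> permutes UNIV" "a \<in> {vector [0, 0, 1, 1], vector [0, 0, 0, 1]}" "r = perm_coords \<sigma> a"
    using Reps_perm[OF r] by blast
  have "singular_point k (a::'a^4)"
    using sa(2) sing1[OF two, of 1 k] sing2[of 1 k] by auto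
  then show ?thesis using singular_perm[OF sa(1)] sa(3) by simp
qed

theorem proposition4p7:
  fixes c :: "'a::alg_closed_field"
  assumes "CHAR('a) = 2" and "c \<noteq> 0"
  shows "{proj_pt p | p. singular_point c p} =
           {proj_pt (perm_coords \<sigma> a) | \<sigma> a. \<sigma> permutes (UNIV :: 4 set) \<and>
               a \<in> {vector [0, 0, 1, 1], vector [0, 0, 0, 1]}}
       \<and> card {proj_pt p | p. singular_point c p} = 10
       \<and> (\<forall>p. singular_point c p \<longrightarrow> is_node c p)"
proof -
  have two: "(2::'a) = 0" using of_nat_CHAR[where 'a='a] assms(1) by simp
  have k: "c \<noteq> 0" by fact
  have S: "{proj_pt p | p. singular_point c p} = proj_pt ` Reps"
  proof (intro equalityI subsetI)
    fix x assume "x \<in> {proj_pt p | p. singular_point c p}"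
    then obtain p where p: "singular_point c p" "x = proj_pt p" by blast
    obtain r t where "r \<in> Reps" "t \<noteq> 0" "p = t *s r" using classify_vec[OF two k p(1)] by blast
    then show "x \<in> proj_pt ` Reps" using p(2) proj_scale by blast
  next
    fix x assume "x \<in> proj_pt ` (Reps :: ('a^4) set)"
    then obtain r where "r \<in> Reps" "x = proj_pt r" by blast
    then show "x \<in> {proj_pt p | p. singular_point c p}" using rep_singular[OF two] by blast
  qed
  have O: "{proj_pt (perm_coords \<sigma> a) | \<sigma> a. \<sigma> permutes (UNIV :: 4 set) \<and>
               a \<in> {vector [0, 0, 1, 1], vector [0, 0, 0, 1]}} = proj_pt ` (Reps :: ('a^4) set)"
  proof (intro equalityI subsetI)
    fix x assume "x \<in> {proj_pt (perm_coords \<sigma> a) | \<sigma> a. \<sigma> permutes (UNIV :: 4 set) \<and>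
               a \<in> {vector [0, 0, 1, 1], vector [0, 0, 0, 1] :: 'a^4}}"
    then obtain \<sigma> a where sa: "\<sigma> permutes UNIV" "a \<in> {vector [0, 0, 1, 1], vector [0, 0, 0, 1] :: 'a^4}"
       "x = proj_pt (perm_coords \<sigma> a)" by blast
    have "singular_point c a"
      using sa(2) sing1[OF two, of 1 c] sing2[of 1 c] by auto
    then have "singular_point c (perm_coords \<sigma> a)" using singular_perm[OF sa(1)] by blast
    then show "x \<in> proj_pt ` Reps" using S sa(3) by blast
  next
    fix x assume "x \<in> proj_pt ` (Reps :: ('a^4) set)"
    then obtain r where r: "r \<in> Reps" "x = proj_pt r" by blast
    then show "x \<in> {proj_pt (perm_coords \<sigma> a) | \<sigma> a. \<sigma> permutes (UNIV :: 4 set) \<and>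
               a \<in> {vector [0, 0, 1, 1], vector [0, 0, 0, 1] :: 'a^4}}"
      using Reps_perm[OF r(1)] by blast
  qed
  have C: "card {proj_pt p | p. singular_point c p} = 10"
    unfolding S using card_image[OF proj_inj] card_Reps by metis
  have N: "\<forall>p. singular_point c p \<longrightarrow> is_node c p"
  proof (intro allI impI)
    fix p assume sp: "singular_point c p"
    obtain r t where rt: "r \<in> Reps" "t \<noteq> 0" "p = t *s r" using classify_vec[OF two k sp] by blast
    obtain \<sigma> a where sa: "\<sigma> permutes UNIV" "a \<in> {vector [0, 0, 1, 1], vector [0, 0, 0, 1] :: 'a^4}" "r = perm_coords \<sigma> a"
      using Reps_perm[OF rt(1)] by blast
    have "is_node c (t *s a)" using sa(2) node1[OF two k rt(2)] node2[OF two k rt(2)] by auto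
    then have "is_node c (perm_coords \<sigma> (t *s a))" using node_perm[OF sa(1)] by blast
    then show "is_node c p" using rt(3) sa(3) perm_scale by metis
  qed
  show ?thesis using S O C N by simp
qed


end
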